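(* Fix $u$ and values $B_u>0$, $R_u^S>0$, $F_u>0$, and write $c_u=B_u r_u$. Define $\eta_u^{\mathrm{opt}}\in[0,1]$, $T_u^{\eta\text{-opt}}$ and $V_u^{\eta\text{-opt}}$ by the following six exhaustive cases: 1. If $c_u<R_u^S$: $\eta_u^{\mathrm{opt}}=0$, $T_u^{\eta\text{-opt}}=\frac{D_u}{c_u}$, $V_u^{\eta\text{-opt}}=0$. 2. If $R_u^S\le c_u<\frac{R_u^S}{\zeta_u}$ and $\frac{F_u}{\rho_u}<\frac{c_u-R_u^S}{1-\zeta_u}$: $\eta_u^{\mathrm{opt}}=\frac{F_u}{F_u(1-\zeta_u)+\rho_uR_u^S}$, $T_u^{\eta\text{-opt}}=\frac{D_u\rho_u}{F_u(1-\zeta_u)+\rho_uR_u^S}$, $V_u^{\eta\text{-opt}}=\frac{D_u}{c_u}\left[c_u-R_u^S-(1-\zeta_u)\frac{F_u}{\rho_u}\right]$. 3. If $R_u^S\le c_u<\frac{R_u^S}{\zeta_u}$ and $\frac{F_u}{\rho_u}\ge\frac{c_u-R_u^S}{1-\zeta_u}$: $\eta_u^{\mathrm{opt}}=\frac{c_u-R_u^S}{(1-\zeta_u)c_u}$, $T_u^{\eta\text{-opt}}=\frac{D_u}{c_u}$, $V_u^{\eta\text{-opt}}=0$. 4. If $c_u\ge\frac{R_u^S}{\zeta_u}$ and $\frac{F_u}{\rho_u}<\frac{R_u^S}{\zeta_u}$: $\eta_u^{\mathrm{opt}}=\frac{F_u}{F_u(1-\zeta_u)+\rho_uR_u^S}$,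 $T_u^{\eta\text{-opt}}=\frac{D_u\rho_u}{F_u(1-\zeta_u)+\rho_uR_u^S}$, $V_u^{\eta\text{-opt}}=\frac{D_u}{c_u}\left[c_u-R_u^S-(1-\zeta_u)\frac{F_u}{\rho_u}\right]$. 5. If $c_u\ge\frac{R_u^S}{\zeta_u}$ and $\frac{R_u^S}{\zeta_u}\le\frac{F_u}{\rho_u}<c_u$: $\eta_u^{\mathrm{opt}}=1$, $T_u^{\eta\text{-opt}}=\frac{\zeta_uD_u}{R_u^S}$, $V_u^{\eta\text{-opt}}=\frac{D_u}{c_u}\left[c_u-R_u^S-(1-\zeta_u)\frac{F_u}{\rho_u}\right]$. 6. If $c_u\ge\frac{R_u^S}{\zeta_u}$ and $\frac{F_u}{\rho_u}\ge c_u$: $\eta_u^{\mathrm{opt}}=1$, $T_u^{\eta\text{-opt}}=\frac{\zeta_uD_u}{R_u^S}$, $V_u^{\eta\text{-opt}}=\frac{D_u}{c_u}(\zeta_uc_u-R_u^S)$. Then $T_u(B_u,R_u^S,F_u,\eta_u^{\mathrm{opt}})=T_u^{\eta\text{-opt}}$, $V_u(B_u,R_u^S,F_u,\eta_u^{\mathrm{opt}})=V_u^{\eta\text{-opt}}$, and for every $\eta_u\in[0,1]$, $T_u(B_u,R_u^S,F_u,\eta_u^{\mathrm{opt}})\le T_u(B_u,R_u^S,F_u,\eta_u)$ and $V_u(B_u,R_u^S,F_u,\eta_u^{\mathrm{opt}})\le V_u(B_u,R_u^S,F_u,\eta_u)$.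
   Context: There are users $u=1,\dots,U$, each with constants $D_u>0$ (data size), $r_u>0$ (spectral efficiency), $\rho_u>0$ (computing intensity) and $\zeta_u\in(0,1)$ (computing output-to-input ratio). For $B_u>0$, $R_u^S>0$, $F_u>0$, $\eta_u\in[0,1]$, write $c_u=B_ur_u$ and define $T_u(B_u,R_u^S,F_u,\eta_u)$ and $V_u(B_u,R_u^S,F_u,\eta_u)$ piecewise: (a) if $\eta_uc_u\ge F_u/\rho_u$, $\zeta_uF_u/\rho_u+(1-\eta_u)c_u\ge R_u^S$, $F_u/\rho_u\ge\frac{\eta_uR_u^S}{\zeta_u\eta_u+1-\eta_u}$: $T_u=\frac{D_u}{R_u^S}(\zeta_u\eta_u+1-\eta_u)$, $V_u=\frac{D_u}{c_u}[c_u-R_u^S-(1-\zeta_u)\frac{F_u}{\rho_u}]$; (b) if $\eta_uc_u\ge F_u/\rho_u$, $\zeta_uF_u/\rho_u+(1-\eta_u)c_u\ge R_u^S$, $F_u/\rho_u<\frac{\eta_uR_u^S}{\zeta_u\eta_u+1-\eta_u}$: $T_u=\frac{\eta_uD_u\rho_u}{F_u}$, $V_u=\frac{D_u}{c_u}[c_u-R_u^S-(1-\zeta_u)\frac{F_u}{\rho_u}]$; (c) if $\eta_uc_u\ge F_u/\rho_u$, $\zeta_uF_u/\rho_u+(1-\eta_u)c_u< R_u^S$: $T_u=\frac{\eta_uD_u\rho_u}{F_u}$, $V_u=\frac{D_u}{c_u}(\eta_uc_u-\frac{F_u}{\rho_u})$; (d) if $\eta_uc_u< F_u/\rho_u$,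 $(\zeta_u\eta_u+1-\eta_u)c_u\ge R_u^S$: $T_u=\frac{D_u}{R_u^S}(\zeta_u\eta_u+1-\eta_u)$, $V_u=\frac{D_u}{c_u}[(\zeta_u\eta_u+1-\eta_u)c_u-R_u^S]$; (e) if $\eta_uc_u< F_u/\rho_u$, $(\zeta_u\eta_u+1-\eta_u)c_u< R_u^S$: $T_u=\frac{D_u}{c_u}$, $V_u=0$. *)

theory Defs
  imports Complex_Main
begin

text \<open>Single user u with constants D (data size), r (spectral efficiency),
  rho (computing intensity), zeta (output-to-input ratio). Variables B, RS, F, eta.
  c = B * r.\<close>

definition Tu :: "real \<Rightarrow> real \<Rightarrow> real \<Rightarrow> real \<Rightarrow> real \<Rightarrow> real \<Rightarrow> real \<Rightarrow> real \<Rightarrow> real" where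
  "Tu D r \<rho> \<zeta> B RS F \<eta> =
    (let c = B * r in
     if \<eta> * c \<ge> F / \<rho> then
       (if \<zeta> * F / \<rho> + (1 - \<eta>) * c \<ge> RS then
          (if F / \<rho> \<ge> \<eta> * RS / (\<zeta> * \<eta> + 1 - \<eta>)
           then D / RS * (\<zeta> * \<eta> + 1 - \<eta>)
           else \<eta> * D * \<rho> / F)
        else \<eta> * D * \<rho> / F)
     else
       (if (\<zeta> * \<eta> + 1 - \<eta>) * c \<ge> RS
        then D / RS * (\<zeta> * \<eta> + 1 - \<eta>)
        else D / c))"

definition Vu :: "real \<Rightarrow> real \<Rightarrow> real \<Rightarrow> real \<Rightarrow> real \<Rightarrow> real \<Rightarrow> real \<Rightarrow> real \<Rightarrow> real" where
  "Vu D r \<rho> \<zeta> B RS F \<eta> =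
    (let c = B * r in
     if \<eta> * c \<ge> F / \<rho> then
       (if \<zeta> * F / \<rho> + (1 - \<eta>) * c \<ge> RS then
          D / c * (c - RS - (1 - \<zeta>) * (F / \<rho>))
        else D / c * (\<eta> * c - F / \<rho>))
     else
       (if (\<zeta> * \<eta> + 1 - \<eta>) * c \<ge> RS
        then D / c * ((\<zeta> * \<eta> + 1 - \<eta>) * c - RS)
        else 0))"

definition opt_triple :: "real \<Rightarrow> real \<Rightarrow> real \<Rightarrow> real \<Rightarrow> real \<Rightarrow> real \<Rightarrow> real \<Rightarrow> real \<times> real \<times> real" where
  "opt_triple D r \<rho> \<zeta> B RS F =
    (let c = B * r in
     if c < RS then (0, D / c, 0)
     else if c < RS / \<zeta> then
       (if F / \<rho> < (c - RS) / (1 - \<zeta>)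
        then (F / (F * (1 - \<zeta>) + \<rho> * RS), D * \<rho> / (F * (1 - \<zeta>) + \<rho> * RS),
              D / c * (c - RS - (1 - \<zeta>) * (F / \<rho>)))
        else ((c - RS) / ((1 - \<zeta>) * c), D / c, 0))
     else if F / \<rho> < RS / \<zeta> then
       (F / (F * (1 - \<zeta>) + \<rho> * RS), D * \<rho> / (F * (1 - \<zeta>) + \<rho> * RS),
        D / c * (c - RS - (1 - \<zeta>) * (F / \<rho>)))
     else if F / \<rho> < c then
       (1, \<zeta> * D / RS, D / c * (c - RS - (1 - \<zeta>) * (F / \<rho>)))
     else (1, \<zeta> * D / RS, D / c * (\<zeta> * c - RS)))"

definition eta_opt where "eta_opt D r \<rho> \<zeta> B RS F = fst (opt_triple D r \<rho> \<zeta> B RS F)"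
definition T_opt where "T_opt D r \<rho> \<zeta> B RS F = fst (snd (opt_triple D r \<rho> \<zeta> B RS F))"
definition V_opt where "V_opt D r \<rho> \<zeta> B RS F = snd (snd (opt_triple D r \<rho> \<zeta> B RS F))"

end

theory Submission imports Defs begin
definition Tn :: "real\<Rightarrow>real\<Rightarrow>real\<Rightarrow>real\<Rightarrow>real\<Rightarrow>real" where
"Tn c R f z e = (if e*c \<ge> f then (if z*f+(1-e)*c \<ge> R then (if f \<ge> e*R/(z*e+1-e) then (z*e+1-e)/R else e/f) else e/f)
  else (if (z*e+1-e)*c \<ge> R then (z*e+1-e)/R else 1/c))"
definition Vn :: "real\<Rightarrow>real\<Rightarrow>real\<Rightarrow>real\<Rightarrow>real\<Rightarrow>real" where
"Vn c R f z e = (if e*c \<ge> f then (if z*f+(1-e)*c \<ge> R then c-R-(1-z)*f else e*c-f)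
  else (if (z*e+1-e)*c \<ge> R then (z*e+1-e)*c-R else 0))"

lemma Tu_n: assumes "\<rho>>0" "B*r>0" shows "Tu D r \<rho> z B R F e = D * Tn (B*r) R (F/\<rho>) z e"
proof -
  have h1: "z*F/\<rho> = z*(F/\<rho>)" by simp
  have h2: "\<And>s. D/R*s = D*(s/R)" by simp
  have h3: "e*D*\<rho>/F = D*(e/(F/\<rho>))" using assms by simp
  have h4: "D/(B*r) = D*(1/(B*r))" by simp
  show ?thesis unfolding Tu_def Tn_def Let_def h1 h2 h3 h4 if_distrib[of "\<lambda>x. D*x"] ..
qed
lemma Vu_n: shows "Vu D r \<rho> z B R F e = D/(B*r) * Vn (B*r) R (F/\<rho>) z e"
proof -
  have h1: "z*F/\<rho> = z*(F/\<rho>)" by simp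
  show ?thesis unfolding Vu_def Vn_def Let_def h1 if_distrib[of "\<lambda>x. D/(B*r)*x"] by simp
qed

context fixes c R f z e :: real
  assumes c: "c>0" and R: "R>0" and f: "f>0" and z: "0<z" "z<1" and e: "0\<le>e" "e\<le>1"
begin
lemma s_pos: "z*e+1-e > 0"
proof -
  have "(1-z)*e \<le> (1-z)*1" using z e by (intro mult_left_mono) auto
  then show ?thesis using z by (simp add: algebra_simps)
qed
lemma s_ge: "z*e+1-e \<ge> z"
proof -
  have "(1-z)*(1-e) \<ge> 0" using z e by simp
  then show ?thesis by (simp add: algebra_simps)
qed


lemma key_sc: "e*c \<ge> f \<Longrightarrow> z*f+(1-e)*c \<ge> R \<Longrightarrow> (z*e+1-e)*c \<ge> R"
proof -
  assume a: "e*c \<ge> f" "z*f+(1-e)*c \<ge> R"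
  have "z*f \<le> z*(e*c)" using a z by simp
  then show ?thesis using a by (simp add: algebra_simps)
qed
lemma key_C: "e*c \<ge> f \<Longrightarrow> \<not> z*f+(1-e)*c \<ge> R \<Longrightarrow> e*R \<ge> (z*e+1-e)*f"
proof -
  assume a: "e*c \<ge> f" "\<not> z*f+(1-e)*c \<ge> R"
  have "e*R \<ge> e*(z*f+(1-e)*c)" using a e by (simp add: mult_left_mono)
  moreover have "(1-e)*(e*c) \<ge> (1-e)*f" using a e by (simp add: mult_left_mono)
  ultimately show ?thesis by (simp add: algebra_simps)
qed
lemma A2f: "\<not> f \<ge> e*R/(z*e+1-e) \<Longrightarrow> (z*e+1-e)*f < e*R"
  using s_pos by (simp add: field_simps)
lemma A1f: "f \<ge> e*R/(z*e+1-e) \<Longrightarrow> (z*e+1-e)*f \<ge> e*R"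
  using s_pos by (simp add: field_simps)

lemma T1: "Tn c R f z e \<ge> 1/c"
proof -
  have q: "R \<le> (z*e+1-e)*c \<Longrightarrow> 1/c \<le> (z*e+1-e)/R" using c R by (simp add: field_simps)
  have q2: "f \<le> e*c \<Longrightarrow> 1/c \<le> e/f" using c f by (simp add: field_simps)
  show ?thesis unfolding Tn_def using q q2 key_sc by auto
qed
lemma T2: "Tn c R f z e \<ge> z/R"
proof -
  have q: "z/R \<le> (z*e+1-e)/R" using s_ge R by (simp add: divide_right_mono)
  have q2: "z*f \<le> e*R \<Longrightarrow> z/R \<le> e/f" using R f by (simp add: field_simps)
  have sf: "z*f \<le> (z*e+1-e)*f" using s_ge f by simp
  have q3: "z*c \<le> R \<Longrightarrow> z/R \<le> 1/c" using R c by (simp add: field_simps)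
  have zc: "z*c \<le> (z*e+1-e)*c" using s_ge c by simp
  show ?thesis unfolding Tn_def using q q2 q3 sf zc key_C A2f by auto
qed
lemma T3: "Tn c R f z e \<ge> 1/(f*(1-z)+R)"
proof -
  have K: "f*(1-z)+R > 0" using f z R by (intro add_pos_pos mult_pos_pos) auto
  have q: "(z*e+1-e)*f \<ge> e*R \<Longrightarrow> 1/(f*(1-z)+R) \<le> (z*e+1-e)/R"
  proof -
    assume a: "(z*e+1-e)*f \<ge> e*R"
    have "(z*e+1-e)*(f*(1-z)+R) = ((z*e+1-e)*f)*(1-z) + (z*e+1-e)*R" by (simp add: algebra_simps)
    also have "\<dots> \<ge> (e*R)*(1-z) + (z*e+1-e)*R" using a z by (simp add: mult_right_mono)
    finally have "(z*e+1-e)*(f*(1-z)+R) \<ge> R" by (simp add: algebra_simps)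
    then show ?thesis using K R by (simp add: field_simps)
  qed
  have q2: "(z*e+1-e)*f \<le> e*R \<Longrightarrow> 1/(f*(1-z)+R) \<le> e/f"
  proof -
    assume a: "(z*e+1-e)*f \<le> e*R"
    have "e*(f*(1-z)+R) = e*f*(1-z) + e*R" by (simp add: algebra_simps)
    also have "\<dots> \<ge> e*f*(1-z) + (z*e+1-e)*f" using a by simp
    finally have "e*(f*(1-z)+R) \<ge> f" by (simp add: algebra_simps)
    then show ?thesis using K f by (simp add: field_simps)
  qed
  have q3: "e*c < f \<Longrightarrow> \<not> (z*e+1-e)*c \<ge> R \<Longrightarrow> 1/(f*(1-z)+R) \<le> 1/c"
  proof -
    assume a: "e*c < f" "\<not> (z*e+1-e)*c \<ge> R"
    have "(1-z)*(e*c) \<le> (1-z)*f" using a z by simp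
    then have "c \<le> f*(1-z)+R" using a by (simp add: algebra_simps)
    then show ?thesis using K c by (simp add: field_simps)
  qed
  have dd: "e*c < f \<Longrightarrow> (z*e+1-e)*c \<ge> R \<Longrightarrow> (z*e+1-e)*f \<ge> e*R"
  proof -
    assume a: "e*c < f" "(z*e+1-e)*c \<ge> R"
    have "(z*e+1-e)*f \<ge> (z*e+1-e)*(e*c)" using a s_pos by simp
    moreover have "e*((z*e+1-e)*c) \<ge> e*R" using a e by (simp add: mult_left_mono)
    ultimately show ?thesis by (simp add: algebra_simps)
  qed
  show ?thesis unfolding Tn_def using q q2 q3 dd key_C A2f A1f
    by (auto simp del: divide_le_0_iff)
qed


lemma case24: assumes cK: "f*(1-z)+R < c" and zf: "z*f < R"
  shows "f/(f*(1-z)+R) \<in> {0..1}" "Tn c R f z (f/(f*(1-z)+R)) = 1/(f*(1-z)+R)"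
    "Vn c R f z (f/(f*(1-z)+R)) = c-R-(1-z)*f"
proof -
  define K where "K = f*(1-z)+R"
  have K: "K>0" unfolding K_def using f z R by (intro add_pos_pos mult_pos_pos) auto
  have Kf: "f \<le> K" using zf unfolding K_def by (simp add: algebra_simps)
  show "f/(f*(1-z)+R) \<in> {0..1}" using K Kf f unfolding K_def[symmetric] by simp
  have cK': "K < c" using cK K_def by simp
  have "z*(f/K)+1-f/K = (z*f+K-f)/K" using K by (simp add: field_simps)
  also have "z*f+K-f = R" unfolding K_def by (simp add: algebra_simps)
  finally have s: "z*(f/K)+1-f/K = R/K" .
  have a1: "f/K*c \<ge> f" using K cK' f by (simp add: field_simps)
  have om: "1-f/K = (R-z*f)/K" using K unfolding K_def by (simp add: field_simps)
  have "c/K \<ge> 1" using K cK' by simp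
  then have "(R-z*f)*1 \<le> (R-z*f)*(c/K)" using zf by (intro mult_left_mono) auto
  then have "(R-z*f)/K*c \<ge> R-z*f" by simp
  then have a2: "z*f+(1-f/K)*c \<ge> R" unfolding om by simp
  have a3: "f/K*R/(R/K) = f" using K R by simp
  have t: "(R/K)/R = 1/K" using R by simp
  show "Tn c R f z (f/(f*(1-z)+R)) = 1/(f*(1-z)+R)"
    unfolding K_def[symmetric] Tn_def using a1 a2 s a3 t by simp
  show "Vn c R f z (f/(f*(1-z)+R)) = c-R-(1-z)*f"
    unfolding K_def[symmetric] Vn_def using a1 a2 by simp
qed

lemma case1: assumes "c < R" shows "Tn c R f z 0 = 1/c" "Vn c R f z 0 = 0"
  using assms f unfolding Tn_def Vn_def by auto

lemma case3: assumes "R \<le> c" "z*c < R" "c \<le> f*(1-z)+R"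
  shows "(c-R)/((1-z)*c) \<in> {0..1}" "Tn c R f z ((c-R)/((1-z)*c)) = 1/c"
    "Vn c R f z ((c-R)/((1-z)*c)) = 0"
proof -
  define h where "h = (c-R)/((1-z)*c)"
  have zc: "(1-z)*c > 0" using z c by simp
  show "(c-R)/((1-z)*c) \<in> {0..1}" using zc assms by (simp add: field_simps)
  have hc: "h*c = (c-R)/(1-z)" unfolding h_def using c z by (simp add: field_simps)
  have hf: "h*c \<le> f" unfolding hc using assms z by (simp add: field_simps)
  have "(z*h+1-h)*c = c - (1-z)*(h*c)" by (simp add: algebra_simps)
  also have "(1-z)*(h*c) = c-R" unfolding hc using z by simp
  finally have sc: "(z*h+1-h)*c = R" by simp
  have s: "z*h+1-h = R/c" using sc c by (simp add: field_simps)
  have T: "(R/c)/R = 1/c" using R by simp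
  have A: "h*c \<ge> f \<Longrightarrow> h*c = f" using hf by simp
  have A2: "z*f+(1-h)*c = R" if hcf: "h*c = f"
  proof -
    have "z*f+(1-h)*c = z*(h*c)+(1-h)*c" using hcf by simp
    also have "\<dots> = (z*h+1-h)*c" by (simp add: algebra_simps)
    finally show ?thesis using sc by simp
  qed
  have A3: "h*c = f \<Longrightarrow> h*R/(R/c) = f" using R c by (simp add: field_simps)
  have V: "h*c = f \<Longrightarrow> c-R-(1-z)*f = 0" using hc z by (simp add: field_simps)
  show "Tn c R f z ((c-R)/((1-z)*c)) = 1/c"
    unfolding h_def[symmetric] Tn_def using A A2 A3 s sc T by auto
  show "Vn c R f z ((c-R)/((1-z)*c)) = 0"
    unfolding h_def[symmetric] Vn_def using A A2 V sc by auto
qed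

lemma case5: assumes "R \<le> z*f" "f < c"
  shows "Tn c R f z 1 = z/R" "Vn c R f z 1 = c-R-(1-z)*f"
proof -
  have "R/z \<le> f" using assms z by (simp add: field_simps)
  then show "Tn c R f z 1 = z/R" "Vn c R f z 1 = c-R-(1-z)*f"
    using assms unfolding Tn_def Vn_def by auto
qed

lemma case6: assumes "R \<le> z*c" "c \<le> f"
  shows "Tn c R f z 1 = z/R" "Vn c R f z 1 = z*c-R"
proof -
  have "z*c \<le> z*f" using assms z by (intro mult_left_mono) auto
  then have "R \<le> z*f" using assms by linarith
  then have "R/z \<le> f" using z by (simp add: field_simps)
  moreover have "c = f \<Longrightarrow> c-R-(1-z)*f = z*c-R" by (simp add: algebra_simps)
  ultimately show "Tn c R f z 1 = z/R" "Vn c R f z 1 = z*c-R"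
    using assms unfolding Tn_def Vn_def by auto
qed

lemma V1: "Vn c R f z e \<ge> 0"
proof -
  have "e*c-f + (z*f+(1-e)*c-R) = c-R-(1-z)*f" by (simp add: algebra_simps)
  then show ?thesis using s_pos c unfolding Vn_def by auto
qed
lemma V2: "Vn c R f z e \<ge> c-R-(1-z)*f"
proof -
  have a: "e*c-f + (z*f+(1-e)*c-R) = c-R-(1-z)*f" by (simp add: algebra_simps)
  have b: "(z*e+1-e)*c-R - (c-R-(1-z)*f) = (1-z)*(f-e*c)" by (simp add: algebra_simps)
  have d: "c-R-(1-z)*f = (z*e+1-e)*c-R - (1-z)*(f-e*c)" by (simp add: algebra_simps)
  have p: "e*c < f \<Longrightarrow> (1-z)*(f-e*c) > 0" using z by simp
  show ?thesis unfolding Vn_def using a b d p by auto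
qed
lemma V3: "Vn c R f z e \<ge> z*c-R"
proof -
  have "z*c \<le> (z*e+1-e)*c" using s_ge c by simp
  moreover have "e*c \<le> c" using e c by simp
  moreover have "(1-e)*f \<le> (1-e)*c" if "e*c\<ge>f" using that e c
    by (intro mult_left_mono) (auto intro: order_trans[OF _ mult_left_le_one_le])
  moreover have "z*f \<le> z*c" if "e*c\<ge>f" using that e c z
    by (intro mult_left_mono) (auto intro: order_trans[OF _ mult_left_le_one_le])
  moreover have "f + z*c \<le> c + z*f" if "e*c\<ge>f"
  proof -
    have "f \<le> c" using that e c by (meson order_trans mult_left_le_one_le less_imp_le)
    then have "(1-z)*f \<le> (1-z)*c" using z by (intro mult_left_mono) auto
    then show ?thesis by (simp add: algebra_simps)
  qed
  ultimately show ?thesis unfolding Vn_def using z c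
    by (auto simp: algebra_simps)
qed
end

lemma main_n:
  fixes D r \<rho> z B R F :: real
  assumes D: "D > 0" and r: "r > 0" and rho: "\<rho> > 0" and z: "z > 0" "z < 1"
    and B: "B > 0" and R: "R > 0" and F: "F > 0"
  defines "c \<equiv> B*r" and "f \<equiv> F/\<rho>"
  shows "\<exists>h t v. eta_opt D r \<rho> z B R F = h \<and> T_opt D r \<rho> z B R F = D*t
     \<and> V_opt D r \<rho> z B R F = D/c*v \<and> h \<in> {0..1} \<and> Tn c R f z h = t \<and> Vn c R f z h = v
     \<and> (\<forall>e\<in>{0..1}. t \<le> Tn c R f z e \<and> v \<le> Vn c R f z e)"
proof -
  have c: "c > 0" unfolding c_def using B r by simp
  have f: "f > 0" unfolding f_def using F rho by simp
  define K where "K = f*(1-z)+R"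
  have K: "K > 0" unfolding K_def using f z R by (intro add_pos_pos mult_pos_pos) auto
  have e1: "F/(F*(1-z)+\<rho>*R) = f/K" unfolding K_def f_def using rho by (simp add: field_simps)
  have e2: "D*\<rho>/(F*(1-z)+\<rho>*R) = D*(1/K)" unfolding K_def f_def using rho by (simp add: field_simps)
  have LT: "\<forall>e\<in>{0..1}. 1/c \<le> Tn c R f z e \<and> z/R \<le> Tn c R f z e \<and> 1/K \<le> Tn c R f z e"
    using T1 T2 T3 c R f z unfolding K_def by auto
  have LV: "\<forall>e\<in>{0..1}. 0 \<le> Vn c R f z e \<and> c-R-(1-z)*f \<le> Vn c R f z e \<and> z*c-R \<le> Vn c R f z e"
    using V1 V2 V3 c R f z by auto
  have ot: "opt_triple D r \<rho> z B R F =
    (if c < R then (0, D / c, 0)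
     else if c < R / z then
       (if f < (c - R) / (1 - z)
        then (f/K, D*(1/K), D / c * (c - R - (1 - z) * f))
        else ((c - R) / ((1 - z) * c), D / c, 0))
     else if f < R / z then
       (f/K, D*(1/K), D / c * (c - R - (1 - z) * f))
     else if f < c then
       (1, D*(z/R), D / c * (c - R - (1 - z) * f))
     else (1, D*(z/R), D / c * (z * c - R)))"
    unfolding opt_triple_def Let_def c_def[symmetric] f_def[symmetric] e1 e2 by simp
  have Dc: "D/c = D*(1/c)" by simp
  have ez0: "(0::real) \<le> 0" and ez1: "(0::real) \<le> 1" by auto
  have Dc0: "D/c*0 = 0" by simp
  show ?thesis
  proof (cases "c < R")
    case True
    then show ?thesis unfolding eta_opt_def T_opt_def V_opt_def ot
      using case1[OF c R f z ez0 ez1 True] LT LV Dc by auto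
  next
    case nR: False
    show ?thesis
    proof (cases "c < R/z")
      case cz: True
      have zc: "z*c < R" using cz z by (simp add: field_simps)
      show ?thesis
      proof (cases "f < (c - R) / (1 - z)")
        case True
        have fc: "f*(1-z) < c-R" using True z by (simp add: field_simps)
        then have Kc: "K < c" unfolding K_def by simp
        have "z*(f*(1-z)) \<le> z*(c-R)" using fc z by (intro mult_left_mono) auto
        then have "z*f*(1-z) < R*(1-z)" using zc z by (simp add: algebra_simps)
        then have zf: "z*f < R" using z by simp
        show ?thesis using case24[OF c R f z ez0 ez1 Kc[unfolded K_def] zf] True nR cz
          unfolding eta_opt_def T_opt_def V_opt_def ot K_def[symmetric]
          using LT LV by auto
      next
        case False
        have "(c-R) \<le> f*(1-z)" using False z by (simp add: field_simps)
        then have cK: "c \<le> f*(1-z)+R" by simp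
        show ?thesis using case3[OF c R f z ez0 ez1 _ zc cK] False nR cz
          unfolding eta_opt_def T_opt_def V_opt_def ot
          using LT LV Dc Dc0 by auto
      qed
    next
      case ncz: False
      have zc: "R \<le> z*c" using ncz z by (simp add: field_simps)
      show ?thesis
      proof (cases "f < R/z")
        case True
        have zf: "z*f < R" using True z by (simp add: field_simps)
        have "(1-z)*(z*f) < (1-z)*R" using zf z by (intro mult_strict_left_mono) auto
        then have "z*K < z*c" unfolding K_def using zc z zf by (simp add: algebra_simps)
        then have Kc: "K < c" using z by simp
        show ?thesis using case24[OF c R f z ez0 ez1 Kc[unfolded K_def] zf] True nR ncz
          unfolding eta_opt_def T_opt_def V_opt_def ot K_def[symmetric]
          using LT LV by auto
      next
        case nf: False
        have zf: "R \<le> z*f" using nf z by (simp add: field_simps)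
        show ?thesis
        proof (cases "f < c")
          case True
          show ?thesis using case5[OF c R f z ez0 ez1 zf True] True nf nR ncz
            unfolding eta_opt_def T_opt_def V_opt_def ot
            using LT LV by auto
        next
          case False
          show ?thesis using case6[OF c R f z ez0 ez1 zc] False nf nR ncz
            unfolding eta_opt_def T_opt_def V_opt_def ot
            using LT LV by auto
        qed
      qed
    qed
  qed
qed

theorem theorem1:
  fixes D r \<rho> \<zeta> B RS F :: real
  assumes "D > 0" "r > 0" "\<rho> > 0" "\<zeta> > 0" "\<zeta> < 1"
    and "B > 0" "RS > 0" "F > 0"
  shows "eta_opt D r \<rho> \<zeta> B RS F \<in> {0..1}
    \<and> Tu D r \<rho> \<zeta> B RS F (eta_opt D r \<rho> \<zeta> B RS F) = T_opt D r \<rho> \<zeta> B RS F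
    \<and> Vu D r \<rho> \<zeta> B RS F (eta_opt D r \<rho> \<zeta> B RS F) = V_opt D r \<rho> \<zeta> B RS F
    \<and> (\<forall>\<eta>\<in>{0..1}.
         Tu D r \<rho> \<zeta> B RS F (eta_opt D r \<rho> \<zeta> B RS F) \<le> Tu D r \<rho> \<zeta> B RS F \<eta>
       \<and> Vu D r \<rho> \<zeta> B RS F (eta_opt D r \<rho> \<zeta> B RS F) \<le> Vu D r \<rho> \<zeta> B RS F \<eta>)"
proof -
  have cpos: "B*r > 0" using assms by simp
  obtain h t v where H: "eta_opt D r \<rho> \<zeta> B RS F = h" "T_opt D r \<rho> \<zeta> B RS F = D*t"
     "V_opt D r \<rho> \<zeta> B RS F = D/(B*r)*v" "h \<in> {0..1}" "Tn (B*r) RS (F/\<rho>) \<zeta> h = t"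
     "Vn (B*r) RS (F/\<rho>) \<zeta> h = v"
     "\<forall>e\<in>{0..1}. t \<le> Tn (B*r) RS (F/\<rho>) \<zeta> e \<and> v \<le> Vn (B*r) RS (F/\<rho>) \<zeta> e"
    using main_n[OF assms] by blast
  have Dc: "D/(B*r) \<ge> 0" using assms by simp
  define a where "a = D/(B*r)"
  have a: "a \<ge> 0" using Dc a_def by simp
  have m: "\<forall>e\<in>{0..1}. D*t \<le> D*Tn (B*r) RS (F/\<rho>) \<zeta> e \<and> a*v \<le> a*Vn (B*r) RS (F/\<rho>) \<zeta> e"
    using H(7) assms(1) a by (auto intro: mult_left_mono)
  show ?thesis
    unfolding H(1) Tu_n[OF assms(3) cpos] Vu_n H(2,3) a_def[symmetric]
    using H(4-6) m by simp
qed

end
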